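(* Let $k=3$ and $\alpha=(\tfrac12,\tfrac13,\tfrac15)$. Then every $\alpha$-communal triple is (uniquely) a nonnegative integer combination of $[7,5,3]$, $[5,3,2]$, $[3,2,1]$, and the number $f(g)$ of $\alpha$-communal triples with entries summing to $g$ satisfies \[ \sum_{g\ge0}f(g)x^g=\frac{1}{(1-x^{15})(1-x^{10})(1-x^{6})},\qquad f(g)=\binom{\lfloor g/2\rfloor+\lfloor g/3\rfloor+\lfloor g/5\rfloor-g+2}{2}. \]
   Context: A triple $[g_1,g_2,g_3]$ of integers is $\alpha$-communal if $0\le g_i\le\alpha_i(g_1+g_2+g_3)$ for $i=1,2,3$. Binomial coefficients $\binom{n}{r}$ are $0$ for $0\le n<r$. *)

theory Defs
  imports Main "HOL-Computational_Algebra.Formal_Power_Series"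
begin

definition communal :: "real \<times> real \<times> real \<Rightarrow> int \<times> int \<times> int \<Rightarrow> bool" where
  "communal \<alpha> g \<longleftrightarrow>
     (case \<alpha> of (a1, a2, a3) \<Rightarrow> case g of (g1, g2, g3) \<Rightarrow>
        0 \<le> g1 \<and> real_of_int g1 \<le> a1 * real_of_int (g1 + g2 + g3) \<and>
        0 \<le> g2 \<and> real_of_int g2 \<le> a2 * real_of_int (g1 + g2 + g3) \<and>
        0 \<le> g3 \<and> real_of_int g3 \<le> a3 * real_of_int (g1 + g2 + g3))"

definition communal_count :: "real \<times> real \<times> real \<Rightarrow> nat \<Rightarrow> nat" where
  "communal_count \<alpha> g =
     card {(g1, g2, g3). communal \<alpha> (g1, g2, g3) \<and> g1 + g2 + g3 = int g}"

end

theory Submission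
  imports Defs
begin


lemma comm_iff:
  "communal (1/2, 1/3, 1/5) (g1, g2, g3) \<longleftrightarrow>
   0 \<le> g1 \<and> 0 \<le> g2 \<and> 0 \<le> g3 \<and> 2*g1 \<le> g1+g2+g3 \<and> 3*g2 \<le> g1+g2+g3 \<and> 5*g3 \<le> g1+g2+g3"
proof -
  have e: "\<And>x s::int. \<And>k::real. k > 0 \<Longrightarrow> (real_of_int x \<le> (1/k) * real_of_int s) = (k * real_of_int x \<le> real_of_int s)"
    by (simp add: field_simps)
  have a: "\<And>x s::int. (2 * real_of_int x \<le> real_of_int s) = (2*x \<le> s)"
          "\<And>x s::int. (3 * real_of_int x \<le> real_of_int s) = (3*x \<le> s)"
          "\<And>x s::int. (5 * real_of_int x \<le> real_of_int s) = (5*x \<le> s)"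
    by linarith+
  show ?thesis unfolding communal_def using e[of 2] e[of 3] e[of 5] a by auto
qed

lemma part1:
  assumes "communal (1/2, 1/3, 1/5) (g1, g2, g3)"
  shows "\<exists>!abc :: nat \<times> nat \<times> nat. case abc of (a, b, c) \<Rightarrow>
               (g1, g2, g3) = (7 * int a + 5 * int b + 3 * int c,
                               5 * int a + 3 * int b + 2 * int c,
                               3 * int a + 2 * int b + int c)"
proof -
  from assms[unfolded comm_iff] have h: "0 \<le> g1" "0 \<le> g2" "0 \<le> g3" "2*g1 \<le> g1+g2+g3" "3*g2 \<le> g1+g2+g3" "5*g3 \<le> g1+g2+g3" by auto
  show ?thesis
  proof (rule ex1I[of _ "(nat (-g1+g2+g3), nat (g1-2*g2+g3), nat (g1+g2-4*g3))"])
    show "case (nat (-g1+g2+g3), nat (g1-2*g2+g3), nat (g1+g2-4*g3)) of (a, b, c) \<Rightarrow>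
               (g1, g2, g3) = (7 * int a + 5 * int b + 3 * int c,
                               5 * int a + 3 * int b + 2 * int c,
                               3 * int a + 2 * int b + int c)" using h by simp
  next
    fix abc :: "nat \<times> nat \<times> nat"
    assume "case abc of (a, b, c) \<Rightarrow>
               (g1, g2, g3) = (7 * int a + 5 * int b + 3 * int c,
                               5 * int a + 3 * int b + 2 * int c,
                               3 * int a + 2 * int b + int c)"
    then show "abc = (nat (-g1+g2+g3), nat (g1-2*g2+g3), nat (g1+g2-4*g3))"
      by (cases abc) auto
  qed
qed


definition T3 :: "nat \<Rightarrow> (nat \<times> nat \<times> nat) set" where
  "T3 n = {(a,b,c). 15*a+10*b+6*c = n}"
definition T2 :: "nat \<Rightarrow> (nat \<times> nat) set" where
  "T2 n = {(b,c). 10*b+6*c = n}"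

lemma T3_fin: "finite (T3 n)"
  by (rule finite_subset[of _ "{0..n} \<times> {0..n} \<times> {0..n}"]) (auto simp: T3_def)
lemma T2_fin: "finite (T2 n)"
  by (rule finite_subset[of _ "{0..n} \<times> {0..n}"]) (auto simp: T2_def)

definition emb :: "nat \<times> nat \<times> nat \<Rightarrow> int \<times> int \<times> int" where
  "emb = (\<lambda>(a,b,c). (7 * int a + 5 * int b + 3 * int c,
                               5 * int a + 3 * int b + 2 * int c,
                               3 * int a + 2 * int b + int c))"

lemma count_T3:
  "communal_count (1/2, 1/3, 1/5) g = card (T3 g)"
proof -
  have inj: "inj emb" unfolding emb_def inj_def by auto
  have "{(g1, g2, g3). communal (1/2, 1/3, 1/5) (g1, g2, g3) \<and> g1 + g2 + g3 = int g} = emb ` T3 g"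
  proof (rule set_eqI, clarify)
    fix g1 g2 g3 :: int
    show "((g1,g2,g3) \<in> {(g1, g2, g3). communal (1/2, 1/3, 1/5) (g1, g2, g3) \<and> g1 + g2 + g3 = int g})
          = ((g1,g2,g3) \<in> emb ` T3 g)"
    proof
      assume "(g1,g2,g3) \<in> {(g1, g2, g3). communal (1/2, 1/3, 1/5) (g1, g2, g3) \<and> g1 + g2 + g3 = int g}"
      then have c: "communal (1/2, 1/3, 1/5) (g1, g2, g3)" and s: "g1 + g2 + g3 = int g" by auto
      from c[unfolded comm_iff] have h: "0 \<le> g1" "0 \<le> g2" "0 \<le> g3" "2*g1 \<le> g1+g2+g3" "3*g2 \<le> g1+g2+g3" "5*g3 \<le> g1+g2+g3" by auto
      have "(nat (-g1+g2+g3), nat (g1-2*g2+g3), nat (g1+g2-4*g3)) \<in> T3 g"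
        unfolding T3_def using h s by simp
      moreover have "emb (nat (-g1+g2+g3), nat (g1-2*g2+g3), nat (g1+g2-4*g3)) = (g1,g2,g3)"
        unfolding emb_def using h by simp
      ultimately show "(g1,g2,g3) \<in> emb ` T3 g" by (metis image_eqI)
    next
      assume "(g1,g2,g3) \<in> emb ` T3 g"
      then obtain a b c where "(a,b,c) \<in> T3 g" "(g1,g2,g3) = emb (a,b,c)" by auto
      then show "(g1,g2,g3) \<in> {(g1, g2, g3). communal (1/2, 1/3, 1/5) (g1, g2, g3) \<and> g1 + g2 + g3 = int g}"
        unfolding T3_def emb_def comm_iff by auto
    qed
  qed
  then show ?thesis unfolding communal_count_def using card_image[OF inj_on_subset[OF inj subset_UNIV]] by simp
qed

lemma T3_rec: "card (T3 n) = card (T2 n) + (if 15 \<le> n then card (T3 (n-15)) else 0)"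
proof -
  have split: "T3 n = (\<lambda>(b,c). (0,b,c)) ` T2 n \<union> (\<lambda>(a,b,c). (Suc a,b,c)) ` (if 15 \<le> n then T3 (n-15) else {})"
  proof (rule set_eqI, clarify)
    fix a b c
    show "((a,b,c) \<in> T3 n) = ((a,b,c) \<in> (\<lambda>(b,c). (0,b,c)) ` T2 n \<union> (\<lambda>(a,b,c). (Suc a,b,c)) ` (if 15 \<le> n then T3 (n-15) else {}))"
    proof (cases a)
      case 0 then show ?thesis by (auto simp: T3_def T2_def image_iff)
    next
      case (Suc a') then show ?thesis by (force simp: T3_def T2_def image_iff)
    qed
  qed
  have i1: "inj_on (\<lambda>(b,c). (0::nat,b,c)) (T2 n)" by (auto simp: inj_on_def)
  have i2: "inj_on (\<lambda>(a,b,c). (Suc a,b,c)) A" for A :: "(nat\<times>nat\<times>nat) set" by (auto simp: inj_on_def)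
  have d: "(\<lambda>(b,c). (0::nat,b,c)) ` T2 n \<inter> (\<lambda>(a,b,c). (Suc a,b::nat,c::nat)) ` A = {}" for A by auto
  have f: "finite (if 15 \<le> n then T3 (n-15) else {})" using T3_fin by auto
  show ?thesis
    apply (subst split)
    apply (subst card_Un_disjoint)
    using T2_fin f d apply auto[3]
    using card_image[OF i1] card_image[OF i2] by (auto simp: T3_fin)
qed

lemma T2_rec: "card (T2 n) = (if 6 dvd n then 1 else 0) + (if 10 \<le> n then card (T2 (n-10)) else 0)"
proof -
  have split: "T2 n = (if 6 dvd n then {(0, n div 6)} else {}) \<union> (\<lambda>(b,c). (Suc b,c)) ` (if 10 \<le> n then T2 (n-10) else {})"
  proof (rule set_eqI, clarify)
    fix b c
    show "((b,c) \<in> T2 n) = ((b,c) \<in> (if 6 dvd n then {(0, n div 6)} else {}) \<union> (\<lambda>(b,c). (Suc b,c)) ` (if 10 \<le> n then T2 (n-10) else {}))"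
    proof (cases b)
      case 0 then show ?thesis by (auto simp: T2_def image_iff)
    next
      case (Suc a') then show ?thesis by (force simp: T2_def image_iff)
    qed
  qed
  have i2: "inj_on (\<lambda>(a,b). (Suc a,b)) A" for A :: "(nat\<times>nat) set" by (auto simp: inj_on_def)
  have f: "finite (if 10 \<le> n then T2 (n-10) else {})" using T2_fin by auto
  show ?thesis
    apply (subst split)
    apply (subst card_Un_disjoint)
    using f apply auto[3]
    using card_image[OF i2] by (auto simp: T2_fin)
qed


lemma fps_part:
  "Abs_fps (\<lambda>n. real (card (T3 n))) = inverse ((1 - fps_X ^ 15) * (1 - fps_X ^ 10) * (1 - fps_X ^ 6))"
proof -
  let ?A3 = "Abs_fps (\<lambda>n. real (card (T3 n)))"
  let ?A2 = "Abs_fps (\<lambda>n. real (card (T2 n)))"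
  let ?A1 = "Abs_fps (\<lambda>n. if 6 dvd n then 1 else 0 :: real)"
  have 3: "(1 - fps_X ^ 15) * ?A3 = ?A2"
    by (rule fps_ext) (simp add: algebra_simps fps_X_power_mult_nth T3_rec[of n for n])
  have 2: "(1 - fps_X ^ 10) * ?A2 = ?A1"
    by (rule fps_ext) (simp add: algebra_simps fps_X_power_mult_nth T2_rec[of n for n])
  have 1: "(1 - fps_X ^ 6) * ?A1 = 1"
  proof (rule fps_ext)
    fix n
    show "fps_nth ((1 - fps_X ^ 6) * ?A1) n = fps_nth (1::real fps) n"
    proof (cases "n < 6")
      case True then show ?thesis by (auto simp: algebra_simps fps_X_power_mult_nth)
    next
      case False
      then obtain m where m: "n = m + 6" by (metis add.commute le_Suc_ex not_less)
      have "(6 dvd (m+6)) = (6 dvd m)" by simp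
      then show ?thesis using m by (simp add: fps_X_power_mult_nth algebra_simps)
    qed
  qed
  have "((1 - fps_X ^ 15) * (1 - fps_X ^ 10) * (1 - fps_X ^ 6)) * ?A3 = 1"
  proof -
    have "((1 - fps_X ^ 15) * (1 - fps_X ^ 10) * (1 - fps_X ^ 6)) * ?A3
        = (1 - fps_X ^ 6) * ((1 - fps_X ^ 10) * ((1 - fps_X ^ 15) * ?A3))"
      by (simp only: mult.assoc mult.commute mult.left_commute)
    also have "\<dots> = 1" using 1 2 3 by simp
    finally show ?thesis .
  qed
  then show ?thesis by (rule fps_inverse_unique[symmetric])
qed


definition H3 :: "nat \<Rightarrow> (nat \<times> nat \<times> nat) set" where
  "H3 n = {(a,b,c). a+b+c = n}"

lemma card_H2: "card {(b::nat,c::nat). b+c = n} = n+1"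
proof -
  have "{(b::nat,c::nat). b+c = n} = (\<lambda>b. (b, n-b)) ` {0..n}" by (auto simp: image_iff)
  moreover have "inj_on (\<lambda>b. (b, n-b)) {0..n}" by (auto simp: inj_on_def)
  ultimately show ?thesis by (simp add: card_image)
qed

lemma H3_fin: "finite (H3 n)"
  by (rule finite_subset[of _ "{0..n} \<times> {0..n} \<times> {0..n}"]) (auto simp: H3_def)

lemma card_H3: "card (H3 n) = (n+2) choose 2"
proof (induction n)
  case 0
  have "H3 0 = {(0,0,0)}" by (auto simp: H3_def)
  then show ?case using binomial_n_n[of 2] by (simp add: numeral_2_eq_2)
next
  case (Suc n)
  have split: "H3 (Suc n) = (\<lambda>(b,c). (0,b,c)) ` {(b::nat,c::nat). b+c = Suc n} \<union> (\<lambda>(a,b,c). (Suc a,b,c)) ` H3 n"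
  proof (rule set_eqI, clarify)
    fix a b c
    show "((a,b,c) \<in> H3 (Suc n)) = ((a,b,c) \<in> (\<lambda>(b,c). (0,b,c)) ` {(b::nat,c::nat). b+c = Suc n} \<union> (\<lambda>(a,b,c). (Suc a,b,c)) ` H3 n)"
      by (cases a) (force simp: H3_def image_iff)+
  qed
  have i1: "inj_on (\<lambda>(b,c). (0::nat,b,c)) A" for A :: "(nat\<times>nat) set" by (auto simp: inj_on_def)
  have i2: "inj_on (\<lambda>(a,b,c). (Suc a,b,c)) A" for A :: "(nat\<times>nat\<times>nat) set" by (auto simp: inj_on_def)
  have f2: "finite {(b::nat,c::nat). b+c = Suc n}"
    by (rule finite_subset[of _ "{0..Suc n} \<times> {0..Suc n}"]) auto
  have "card (H3 (Suc n)) = (Suc n + 1) + ((n+2) choose 2)"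
    apply (subst split)
    apply (subst card_Un_disjoint)
    using f2 H3_fin apply auto[3]
    using card_image[OF i1] card_image[OF i2] card_H2 Suc.IH by simp
  also have "\<dots> = (Suc n + 2) choose 2" using binomial_Suc_Suc[of "Suc (Suc n)" 1] by (simp add: numeral_2_eq_2)
  finally show ?case .
qed

lemma part3:
  "communal_count (1/2, 1/3, 1/5) g =
     nat (\<lfloor>real g / 2\<rfloor> + \<lfloor>real g / 3\<rfloor> + \<lfloor>real g / 5\<rfloor> - int g + 2) choose 2"
proof -
  define d2 where "d2 = int g div 2"
  define d3 where "d3 = int g div 3"
  define d5 where "d5 = int g div 5"
  define m where "m = d2 + d3 + d5 - int g"
  have fl: "\<lfloor>real g / 2\<rfloor> = d2" "\<lfloor>real g / 3\<rfloor> = d3" "\<lfloor>real g / 5\<rfloor> = d5"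
    unfolding d2_def d3_def d5_def
    using floor_divide_of_int_eq[of "int g" 2, where 'a=real]
          floor_divide_of_int_eq[of "int g" 3, where 'a=real]
          floor_divide_of_int_eq[of "int g" 5, where 'a=real] by simp_all
  have dd: "2*d2 \<le> int g" "int g < 2*d2 + 2" "3*d3 \<le> int g" "int g < 3*d3 + 3"
           "5*d5 \<le> int g" "int g < 5*d5 + 5"
    unfolding d2_def d3_def d5_def by linarith+
  define S where "S = {(g1, g2, g3). communal (1/2, 1/3, 1/5) (g1, g2, g3) \<and> g1 + g2 + g3 = int g}"
  have memS: "(g1,g2,g3) \<in> S \<longleftrightarrow> 0 \<le> g1 \<and> 0 \<le> g2 \<and> 0 \<le> g3 \<and> g1 \<le> d2 \<and> g2 \<le> d3 \<and> g3 \<le> d5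
      \<and> g1 + g2 + g3 = int g" for g1 g2 g3
    unfolding S_def comm_iff d2_def d3_def d5_def by auto
  have "card S = nat (m + 2) choose 2"
  proof (cases "m < 0")
    case True
    have "S = {}"
    proof (rule ccontr)
      assume "S \<noteq> {}"
      then obtain g1 g2 g3 where "(g1,g2,g3) \<in> S" by auto
      then show False using memS True unfolding m_def by auto
    qed
    moreover have "nat (m+2) < 2" using True by simp
    ultimately show ?thesis by simp
  next
    case False
    have mle: "m \<le> d5" using dd unfolding m_def by linarith
    define F where "F = (\<lambda>(h1::nat,h2::nat,h3::nat). (d2 - int h1, d3 - int h2, d5 - int h3))"
    have "S = F ` H3 (nat m)"
    proof (rule set_eqI, clarify)
      fix g1 g2 g3
      show "((g1,g2,g3) \<in> S) = ((g1,g2,g3) \<in> F ` H3 (nat m))"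
      proof
        assume a: "(g1,g2,g3) \<in> S"
        then have "(nat (d2-g1), nat (d3-g2), nat (d5-g3)) \<in> H3 (nat m)"
          using memS[of g1 g2 g3] unfolding H3_def m_def by auto
        moreover have "F (nat (d2-g1), nat (d3-g2), nat (d5-g3)) = (g1,g2,g3)"
          using a memS[of g1 g2 g3] unfolding F_def by auto
        ultimately show "(g1,g2,g3) \<in> F ` H3 (nat m)" by (metis image_eqI)
      next
        assume "(g1,g2,g3) \<in> F ` H3 (nat m)"
        then obtain a b c where abc: "a+b+c = nat m" "(g1,g2,g3) = F (a,b,c)"
          unfolding H3_def by auto
        then show "(g1,g2,g3) \<in> S" unfolding memS F_def using False mle dd unfolding m_def by auto
      qed
    qed
    moreover have "inj_on F (H3 (nat m))" unfolding F_def by (auto simp: inj_on_def)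
    ultimately have "card S = card (H3 (nat m))" by (simp add: card_image)
    also have "\<dots> = (nat m + 2) choose 2" by (rule card_H3)
    also have "nat m + 2 = nat (m+2)" using False by simp
    finally show ?thesis .
  qed
  then show ?thesis unfolding communal_count_def S_def[symmetric] fl m_def by simp
qed


theorem mainTheorem9:
  defines "\<alpha> \<equiv> (1/2, 1/3, 1/5) :: real \<times> real \<times> real"
  shows "(\<forall>g1 g2 g3. communal \<alpha> (g1, g2, g3) \<longrightarrow>
            (\<exists>!abc :: nat \<times> nat \<times> nat. case abc of (a, b, c) \<Rightarrow>
               (g1, g2, g3) = (7 * int a + 5 * int b + 3 * int c,
                               5 * int a + 3 * int b + 2 * int c,
                               3 * int a + 2 * int b + int c)))
       \<and> Abs_fps (\<lambda>g. of_nat (communal_count \<alpha> g) :: real)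
           = inverse ((1 - fps_X ^ 15) * (1 - fps_X ^ 10) * (1 - fps_X ^ 6))
       \<and> (\<forall>g. communal_count \<alpha> g =
              nat (\<lfloor>real g / 2\<rfloor> + \<lfloor>real g / 3\<rfloor> + \<lfloor>real g / 5\<rfloor> - int g + 2) choose 2)"
  unfolding \<alpha>_def using part1 fps_part count_T3 part3 by simp

end
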